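(* Assume that $|l+L|\leq N$. Set $\vec{N} = (N+L,N-L)$. Parameterize a $2\times 2$ complex matrix as $Z=\begin{pmatrix}x_1 & y_1\\ x_2 & y_2\end{pmatrix}$. Then the polynomial $\varphi_\sigma$ defined by \[ \varphi_\sigma = \begin{cases} (x_{1}\bar{x}_{2})^{N-l-L}(\bar{x}_{2})^{2(l+L)}(x_{1}y_{2}-x_{2}y_{1})^{l+2L}, & \text{if } l+L\ge 0,\ l+2L\ge 0;\\ (x_{1}\bar{x}_{2})^{N-l-L}(\bar{x}_{2})^{2(l+L)}(\bar{x}_{1}\bar{y}_{2}-\bar{x}_{2}\bar{y}_{1})^{-(l+2L)}, & \text{if } l+L\ge 0,\ l+2L\le 0;\\ (x_{1}\bar{x}_{2})^{N+l+L}(x_{1})^{-2(l+L)}(x_{1}y_{2}-x_{2}y_{1})^{l+2L}, & \text{if } l+L\le 0,\ l+2L\ge 0;\\ (x_{1}\bar{x}_{2})^{N+l+L}(x_{1})^{-2(l+L)}(\bar{x}_{1}\bar{y}_{2}-\bar{x}_{2}\bar{y}_{1})^{-(l+2L)}, & \text{if } l+L\le 0,\ l+2L\le 0 \end{cases} \] is a bi-$(\vec{N},\chi_{-l}\otimes\chi_{l+2L})$-equivariant polynomial function in $\mathbb{C}[\mathrm{Mat}_{2}^{\mathbb{R}}]$. The restriction map $\iota_2: \mathbb{C}[\mathrm{Mat}_{2}^{\mathbb{R}}]\rightarrow C^\infty(\mathrm{U}_2)$ sends $\varphi_\sigma$ to a smooth function $\iota_2(\varphi_\sigma)$ living in the minimal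 $K$-type $\tau_\sigma$ of $\sigma$. More precisely, $\iota_2(\varphi_\sigma)\in \tau_{\sigma,-l-L}$.
   Context: For an integer $k$, $\chi_k$ denotes the unitary character $z\mapsto (z/|z|)^k$ of $\mathbb{C}^\times$ (also restricted to $\mathrm{U}_1$), and $|z|_{\mathbb{C}}=z\bar z$. Let $N\geq 0$, $m$, $L$ be integers and let $\sigma = \mathrm{Ind}_{B_{\mathrm{GL}_2}}^{\mathrm{GL}_2(\mathbb{C})} |\cdot|_{\mathbb{C}}^{m/2}\chi_{N+L}\otimes |\cdot|_{\mathbb{C}}^{m/2}\chi_{-N+L}$ (normalized induction from the upper triangular Borel). Let $\chi$ be a character of $\mathbb{C}^\times$ with $\chi(a)=|a|_{\mathbb{C}}^{u_0}\chi_l(a/|a|)$ for some $l\in\mathbb{Z}$, $u_0\in\mathbb{C}$. The minimal $\mathrm{U}_2$-type $\tau_\sigma$ of $\sigma$ has highest weight $(N+L,-N+L)$ and decomposes into one-dimensional weight spaces $\tau_{\sigma,k}=\{v\in\tau_\sigma : \sigma(\mathrm{diag}(e^{i\theta},e^{-i\theta}))v=e^{2ik\theta}v\}$, $-N\le k\le N$. $\mathbb{C}[\mathrm{Mat}_2^{\mathbb{R}}]$ is the space of complex polynomials in the real and imaginary parts of the entries of $Z$ (equivalently in the entries of $Z$ and $\bar Z$), on which $\mathrm{U}_2$ acts by right translation $f(Z,\bar Z)\mapsto f(Zk,\bar Z\bar k)$; $\iota_2$ is restriction of a polynomial to $\mathrm{U}_2$ (so $\iota_2(f)(k)=f(k,\bar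 k)$), which is $\mathrm{U}_2$-equivariant. "Bi-$(\vec N,\chi_{-l}\otimes\chi_{l+2L})$-equivariant" means: equivariant under left multiplication by the diagonal torus of $\mathrm{U}_2$ via the character $\chi_{N+L}\otimes\chi_{-N+L}$ (so that the restriction lies in $\mathrm{Ind}_{T\cap\mathrm{U}_2}^{\mathrm{U}_2}\chi_{N+L}\otimes\chi_{-N+L}$), and under right multiplication by $\mathrm{diag}(k_1,k_2)$, $k_1,k_2\in\mathrm{U}_1$, via $\chi_{-l}(k_1)\chi_{l+2L}(k_2)$. *)

theory Defs
  imports "HOL-Analysis.Analysis"
begin

definition diag2 :: "complex \<Rightarrow> complex \<Rightarrow> complex^2^2" where
  "diag2 a b = (\<chi> i j. if i = j then (if i = 1 then a else b) else 0)"

definition conj_transpose2 :: "complex^2^2 \<Rightarrow> complex^2^2" where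
  "conj_transpose2 A = (\<chi> i j. cnj (A $ j $ i))"

definition U2 :: "(complex^2^2) set" where
  "U2 = {k. k ** conj_transpose2 k = mat 1}"

definition chi :: "int \<Rightarrow> complex \<Rightarrow> complex" where
  "chi k z = (z / complex_of_real (cmod z)) powi k"

inductive_set mat2_poly_funs :: "(complex^2^2 \<Rightarrow> complex) set" where
  const: "(\<lambda>Z. c) \<in> mat2_poly_funs"
| entry: "(\<lambda>Z. Z $ i $ j) \<in> mat2_poly_funs"
| conj_entry: "(\<lambda>Z. cnj (Z $ i $ j)) \<in> mat2_poly_funs"
| add: "f \<in> mat2_poly_funs \<Longrightarrow> g \<in> mat2_poly_funs \<Longrightarrow> (\<lambda>Z. f Z + g Z) \<in> mat2_poly_funs"
| mult: "f \<in> mat2_poly_funs \<Longrightarrow> g \<in> mat2_poly_funs \<Longrightarrow> (\<lambda>Z. f Z * g Z) \<in> mat2_poly_funs"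

definition bi_equivariant :: "int \<Rightarrow> int \<Rightarrow> int \<Rightarrow> (complex^2^2 \<Rightarrow> complex) \<Rightarrow> bool" where
  "bi_equivariant N l L f \<longleftrightarrow>
     (\<forall>t1 t2 Z. cmod t1 = 1 \<longrightarrow> cmod t2 = 1 \<longrightarrow>
        f (diag2 t1 t2 ** Z) = chi (N + L) t1 * chi (- N + L) t2 * f Z) \<and>
     (\<forall>k1 k2 Z. cmod k1 = 1 \<longrightarrow> cmod k2 = 1 \<longrightarrow>
        f (Z ** diag2 k1 k2) = chi (- l) k1 * chi (l + 2 * L) k2 * f Z)"

text \<open>The polynomial phi_sigma (cases as in the paper, boundary cases taken in the listed order;
  the formulas agree on overlaps).\<close>
definition phi_sigma :: "int \<Rightarrow> int \<Rightarrow> int \<Rightarrow> complex^2^2 \<Rightarrow> complex" where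
  "phi_sigma N l L Z =
    (let x1 = Z$1$1; y1 = Z$1$2; x2 = Z$2$1; y2 = Z$2$2;
         d = x1 * y2 - x2 * y1; dbar = cnj x1 * cnj y2 - cnj x2 * cnj y1 in
     if l + L \<ge> 0 \<and> l + 2*L \<ge> 0 then
       (x1 * cnj x2) powi (N - l - L) * (cnj x2) powi (2*(l+L)) * d powi (l + 2*L)
     else if l + L \<ge> 0 \<and> l + 2*L \<le> 0 then
       (x1 * cnj x2) powi (N - l - L) * (cnj x2) powi (2*(l+L)) * dbar powi (-(l + 2*L))
     else if l + L \<le> 0 \<and> l + 2*L \<ge> 0 then
       (x1 * cnj x2) powi (N + l + L) * x1 powi (-2*(l+L)) * d powi (l + 2*L)
     else
       (x1 * cnj x2) powi (N + l + L) * x1 powi (-2*(l+L)) * dbar powi (-(l + 2*L)))"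

definition iota2 :: "(complex^2^2 \<Rightarrow> complex) \<Rightarrow> (complex^2^2 \<Rightarrow> complex)" where
  "iota2 f = (\<lambda>k. if k \<in> U2 then f k else 0)"

text \<open>The minimal U_2-type tau_sigma (highest weight (N+L,-N+L)), realized inside
  Ind_{T cap U_2}^{U_2} chi_{N+L} (x) chi_{-N+L} as the span of the functions
  k |-> det(k)^{L-N} k11^{2N-j} k12^j, 0 <= j <= 2N (the model Sym^{2N} (x) det^{L-N}).\<close>
definition tau_sigma :: "int \<Rightarrow> int \<Rightarrow> (complex^2^2 \<Rightarrow> complex) set" where
  "tau_sigma N L = {f. (\<forall>k. k \<notin> U2 \<longrightarrow> f k = 0) \<and>
     (\<exists>c :: nat \<Rightarrow> complex. \<forall>k\<in>U2.
        f k = (\<Sum>j\<le>nat (2*N). c j * det k powi (L - N) * (k$1$1) ^ (nat (2*N) - j) * (k$1$2) ^ j))}"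

definition tau_sigma_wt :: "int \<Rightarrow> int \<Rightarrow> int \<Rightarrow> (complex^2^2 \<Rightarrow> complex) set" where
  "tau_sigma_wt N L m = {f \<in> tau_sigma N L. \<forall>g\<in>U2. \<forall>\<theta>::real.
      f (g ** diag2 (cis \<theta>) (cis (-\<theta>))) = cis (2 * of_int m * \<theta>) * f g}"

end

theory Submission
  imports Defs
begin

lemma cnj_unit: "cmod t = 1 \<Longrightarrow> cnj t = inverse t"
  by (metis complex_div_cnj div_by_1 inverse_eq_divide mult_1 of_real_1 power_one)

lemma chi_unit: "cmod t = 1 \<Longrightarrow> chi k t = t powi k"
  by (simp add: chi_def)

definition PHI :: "int \<Rightarrow> int \<Rightarrow> int \<Rightarrow> complex \<Rightarrow> complex \<Rightarrow> complex \<Rightarrow> complex \<Rightarrow> complex" where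
  "PHI N l L x1 y1 x2 y2 =
    (let d = x1 * y2 - x2 * y1; dbar = cnj x1 * cnj y2 - cnj x2 * cnj y1 in
     if l + L \<ge> 0 \<and> l + 2*L \<ge> 0 then
       (x1 * cnj x2) powi (N - l - L) * (cnj x2) powi (2*(l+L)) * d powi (l + 2*L)
     else if l + L \<ge> 0 \<and> l + 2*L \<le> 0 then
       (x1 * cnj x2) powi (N - l - L) * (cnj x2) powi (2*(l+L)) * dbar powi (-(l + 2*L))
     else if l + L \<le> 0 \<and> l + 2*L \<ge> 0 then
       (x1 * cnj x2) powi (N + l + L) * x1 powi (-2*(l+L)) * d powi (l + 2*L)
     else
       (x1 * cnj x2) powi (N + l + L) * x1 powi (-2*(l+L)) * dbar powi (-(l + 2*L)))"

lemma phi_PHI: "phi_sigma N l L Z = PHI N l L (Z$1$1) (Z$1$2) (Z$2$1) (Z$2$2)"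
  unfolding phi_sigma_def PHI_def Let_def by simp



lemma GA: fixes t1 t2 :: complex assumes "t1 \<noteq> 0" "t2 \<noteq> 0" "E1 = n + p" "E2 = p - n - m"
  shows "(t1*x1*(inverse t2*X)) powi n * (inverse t2*X) powi m * (t1*t2*d) powi p
    = t1 powi E1 * t2 powi E2 * ((x1*X) powi n * X powi m * d powi p)"
  using assms(1,2) unfolding assms(3,4) power_int_mult_distrib power_int_inverse power_int_minus by (simp add: power_int_add power_int_diff power_int_minus field_simps)
lemma GB: fixes t1 t2 :: complex assumes "t1 \<noteq> 0" "t2 \<noteq> 0" "E1 = n + p" "E2 = p - n - m"
  shows "(t1*x1*(inverse t2*X)) powi n * (inverse t2*X) powi m * (inverse t1*inverse t2*d) powi (-p)
    = t1 powi E1 * t2 powi E2 * ((x1*X) powi n * X powi m * d powi (-p))"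
  using assms(1,2) unfolding assms(3,4) power_int_mult_distrib power_int_inverse power_int_minus by (simp add: power_int_add power_int_diff power_int_minus field_simps)
lemma GC: fixes t1 t2 :: complex assumes "t1 \<noteq> 0" "t2 \<noteq> 0" "E1 = n + m + p" "E2 = p - n"
  shows "(t1*x1*(inverse t2*X)) powi n * (t1*x1) powi m * (t1*t2*d) powi p
    = t1 powi E1 * t2 powi E2 * ((x1*X) powi n * x1 powi m * d powi p)"
  using assms(1,2) unfolding assms(3,4) power_int_mult_distrib power_int_inverse power_int_minus by (simp add: power_int_add power_int_diff power_int_minus field_simps)
lemma GD: fixes t1 t2 :: complex assumes "t1 \<noteq> 0" "t2 \<noteq> 0" "E1 = n + m + p" "E2 = p - n"
  shows "(t1*x1*(inverse t2*X)) powi n * (t1*x1) powi m * (inverse t1*inverse t2*d) powi (-p)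
    = t1 powi E1 * t2 powi E2 * ((x1*X) powi n * x1 powi m * d powi (-p))"
  using assms(1,2) unfolding assms(3,4) power_int_mult_distrib power_int_inverse power_int_minus by (simp add: power_int_add power_int_diff power_int_minus field_simps)
lemma RA: fixes t1 t2 :: complex assumes "t1 \<noteq> 0" "t2 \<noteq> 0" "E1 = p - m" "E2 = p"
  shows "(t1*x1*(inverse t1*X)) powi n * (inverse t1*X) powi m * (t1*t2*d) powi p
    = t1 powi E1 * t2 powi E2 * ((x1*X) powi n * X powi m * d powi p)"
  using assms(1,2) unfolding assms(3,4) power_int_mult_distrib power_int_inverse power_int_minus by (simp add: power_int_add power_int_diff power_int_minus field_simps)
lemma RB: fixes t1 t2 :: complex assumes "t1 \<noteq> 0" "t2 \<noteq> 0" "E1 = p - m" "E2 = p"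
  shows "(t1*x1*(inverse t1*X)) powi n * (inverse t1*X) powi m * (inverse t1*inverse t2*d) powi (-p)
    = t1 powi E1 * t2 powi E2 * ((x1*X) powi n * X powi m * d powi (-p))"
  using assms(1,2) unfolding assms(3,4) power_int_mult_distrib power_int_inverse power_int_minus by (simp add: power_int_add power_int_diff power_int_minus field_simps)
lemma RC: fixes t1 t2 :: complex assumes "t1 \<noteq> 0" "t2 \<noteq> 0" "E1 = m + p" "E2 = p"
  shows "(t1*x1*(inverse t1*X)) powi n * (t1*x1) powi m * (t1*t2*d) powi p
    = t1 powi E1 * t2 powi E2 * ((x1*X) powi n * x1 powi m * d powi p)"
  using assms(1,2) unfolding assms(3,4) power_int_mult_distrib power_int_inverse power_int_minus by (simp add: power_int_add power_int_diff power_int_minus field_simps)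
lemma RD: fixes t1 t2 :: complex assumes "t1 \<noteq> 0" "t2 \<noteq> 0" "E1 = m + p" "E2 = p"
  shows "(t1*x1*(inverse t1*X)) powi n * (t1*x1) powi m * (inverse t1*inverse t2*d) powi (-p)
    = t1 powi E1 * t2 powi E2 * ((x1*X) powi n * x1 powi m * d powi (-p))"
  using assms(1,2) unfolding assms(3,4) power_int_mult_distrib power_int_inverse power_int_minus by (simp add: power_int_add power_int_diff power_int_minus field_simps)

lemma PHI_left:
  assumes t1: "cmod t1 = 1" and t2: "cmod t2 = 1" and "\<bar>l + L\<bar> \<le> N"
  shows "PHI N l L (t1*x1) (t1*y1) (t2*x2) (t2*y2) = t1 powi (N+L) * t2 powi (-N+L) * PHI N l L x1 y1 x2 y2"
proof -
  have nz: "t1 \<noteq> 0" "t2 \<noteq> 0" using t1 t2 by auto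
  have c1: "cnj (t1 * z) = inverse t1 * cnj z" for z using cnj_unit[OF t1] by simp
  have c2: "cnj (t2 * z) = inverse t2 * cnj z" for z using cnj_unit[OF t2] by simp
  have d: "t1*x1 * (t2*y2) - t2*x2 * (t1*y1) = t1 * t2 * (x1*y2 - x2*y1)" by (simp add: algebra_simps)
  have db: "inverse t1 * cnj x1 * (inverse t2 * cnj y2) - inverse t2 * cnj x2 * (inverse t1 * cnj y1)
     = inverse t1 * inverse t2 * (cnj x1 * cnj y2 - cnj x2 * cnj y1)" by (simp add: algebra_simps)
  have e1: "N + L = (N - l - L) + (l + 2*L)" "-N+L = (l+2*L) - (N-l-L) - 2*(l+L)" by auto
  have e3: "N + L = (N + l + L) - 2*(l+L) + (l + 2*L)" "-N+L = (l+2*L) - (N+l+L)" by auto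
  consider (A) "l + L \<ge> 0 \<and> l + 2*L \<ge> 0" | (B) "\<not> (l + L \<ge> 0 \<and> l + 2*L \<ge> 0)" "l + L \<ge> 0 \<and> l + 2*L \<le> 0"
    | (C) "\<not> (l + L \<ge> 0 \<and> l + 2*L \<ge> 0)" "\<not> (l + L \<ge> 0 \<and> l + 2*L \<le> 0)" "l + L \<le> 0 \<and> l + 2*L \<ge> 0"
    | (D) "\<not> (l + L \<ge> 0 \<and> l + 2*L \<ge> 0)" "\<not> (l + L \<ge> 0 \<and> l + 2*L \<le> 0)" "\<not> (l + L \<le> 0 \<and> l + 2*L \<ge> 0)"
    by linarith
  then show ?thesis
  proof cases
    case A show ?thesis
      unfolding PHI_def Let_def c1 c2 d db if_P[OF A] by (rule GA[OF nz]) (simp add: algebra_simps)+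
  next
    case B show ?thesis
      unfolding PHI_def Let_def c1 c2 d db if_not_P[OF B(1)] if_P[OF B(2)] by (rule GB[OF nz]) (simp add: algebra_simps)+
  next
    case C show ?thesis
      unfolding PHI_def Let_def c1 c2 d db if_not_P[OF C(1)] if_not_P[OF C(2)] if_P[OF C(3)] by (rule GC[OF nz]) (simp add: algebra_simps)+
  next
    case D show ?thesis
      unfolding PHI_def Let_def c1 c2 d db if_not_P[OF D(1)] if_not_P[OF D(2)] if_not_P[OF D(3)] by (rule GD[OF nz]) (simp add: algebra_simps)+
  qed
qed
lemma PHI_right:
  assumes t1: "cmod t1 = 1" and t2: "cmod t2 = 1" and "\<bar>l + L\<bar> \<le> N"
  shows "PHI N l L (t1*x1) (t2*y1) (t1*x2) (t2*y2) = t1 powi (-l) * t2 powi (l + 2*L) * PHI N l L x1 y1 x2 y2"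
proof -
  have nz: "t1 \<noteq> 0" "t2 \<noteq> 0" using t1 t2 by auto
  have c1: "cnj (t1 * z) = inverse t1 * cnj z" for z using cnj_unit[OF t1] by simp
  have c2: "cnj (t2 * z) = inverse t2 * cnj z" for z using cnj_unit[OF t2] by simp
  have d: "t1*x1 * (t2*y2) - t1*x2 * (t2*y1) = t1 * t2 * (x1*y2 - x2*y1)" by (simp add: algebra_simps)
  have db: "inverse t1 * cnj x1 * (inverse t2 * cnj y2) - inverse t1 * cnj x2 * (inverse t2 * cnj y1)
     = inverse t1 * inverse t2 * (cnj x1 * cnj y2 - cnj x2 * cnj y1)" by (simp add: algebra_simps)
  have e1: "N + L = (N - l - L) + (l + 2*L)" "-N+L = (l+2*L) - (N-l-L) - 2*(l+L)" by auto
  have e3: "N + L = (N + l + L) - 2*(l+L) + (l + 2*L)" "-N+L = (l+2*L) - (N+l+L)" by auto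
  consider (A) "l + L \<ge> 0 \<and> l + 2*L \<ge> 0" | (B) "\<not> (l + L \<ge> 0 \<and> l + 2*L \<ge> 0)" "l + L \<ge> 0 \<and> l + 2*L \<le> 0"
    | (C) "\<not> (l + L \<ge> 0 \<and> l + 2*L \<ge> 0)" "\<not> (l + L \<ge> 0 \<and> l + 2*L \<le> 0)" "l + L \<le> 0 \<and> l + 2*L \<ge> 0"
    | (D) "\<not> (l + L \<ge> 0 \<and> l + 2*L \<ge> 0)" "\<not> (l + L \<ge> 0 \<and> l + 2*L \<le> 0)" "\<not> (l + L \<le> 0 \<and> l + 2*L \<ge> 0)"
    by linarith
  then show ?thesis
  proof cases
    case A show ?thesis
      unfolding PHI_def Let_def c1 c2 d db if_P[OF A] by (rule RA[OF nz]) (simp add: algebra_simps)+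
  next
    case B show ?thesis
      unfolding PHI_def Let_def c1 c2 d db if_not_P[OF B(1)] if_P[OF B(2)] by (rule RB[OF nz]) (simp add: algebra_simps)+
  next
    case C show ?thesis
      unfolding PHI_def Let_def c1 c2 d db if_not_P[OF C(1)] if_not_P[OF C(2)] if_P[OF C(3)] by (rule RC[OF nz]) (simp add: algebra_simps)+
  next
    case D show ?thesis
      unfolding PHI_def Let_def c1 c2 d db if_not_P[OF D(1)] if_not_P[OF D(2)] if_not_P[OF D(3)] by (rule RD[OF nz]) (simp add: algebra_simps)+
  qed
qed

lemma UA: fixes e :: complex assumes "e \<noteq> 0" "n = int a" "m = int c" "b = a + c" "E = p - n - m"
  shows "(x1 * (-y1*inverse e)) powi n * (-y1*inverse e) powi m * e powi p = (-1)^b * e powi E * x1^a * y1^b"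
proof -
  have "(x1 * (-y1*inverse e)) powi n * (-y1*inverse e) powi m = (-1)^b * x1^a * y1^b * inverse e ^ b"
    unfolding assms(2-4) power_int_of_nat power_add power_mult_distrib power_minus[of y1] by (simp add: algebra_simps)
  moreover have "inverse e ^ b * e powi p = e powi E"
    using assms(1) unfolding assms(2-5) by (simp add: power_int_diff power_int_add field_simps flip: power_int_of_nat)
  ultimately show ?thesis by (simp add: algebra_simps)
qed
lemma UB: fixes e :: complex assumes "e \<noteq> 0" "n = int a" "m = int c" "b = a + c" "E = p - n - m"
  shows "(x1 * (-y1*inverse e)) powi n * (-y1*inverse e) powi m * (inverse e) powi (-p) = (-1)^b * e powi E * x1^a * y1^b"
proof -
  have "(inverse e) powi (-p) = e powi p" by (simp add: power_int_inverse power_int_minus)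
  then show ?thesis using UA[OF assms] by simp
qed
lemma UC: fixes e :: complex assumes "e \<noteq> 0" "n = int b" "m = int c" "a = b + c" "E = p - n"
  shows "(x1 * (-y1*inverse e)) powi n * x1 powi m * e powi p = (-1)^b * e powi E * x1^a * y1^b"
proof -
  have "(x1 * (-y1*inverse e)) powi n * x1 powi m = (-1)^b * x1^a * y1^b * inverse e ^ b"
    unfolding assms(2-4) power_int_of_nat power_add power_mult_distrib power_minus[of y1] by (simp add: algebra_simps)
  moreover have "inverse e ^ b * e powi p = e powi E"
    using assms(1) unfolding assms(2-5) by (simp add: power_int_diff power_int_add field_simps flip: power_int_of_nat)
  ultimately show ?thesis by (simp add: algebra_simps)
qed
lemma UD: fixes e :: complex assumes "e \<noteq> 0" "n = int b" "m = int c" "a = b + c" "E = p - n"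
  shows "(x1 * (-y1*inverse e)) powi n * x1 powi m * (inverse e) powi (-p) = (-1)^b * e powi E * x1^a * y1^b"
proof -
  have "(inverse e) powi (-p) = e powi p" by (simp add: power_int_inverse power_int_minus)
  then show ?thesis using UC[OF assms] by simp
qed

lemma unit_rel:
  fixes x1 y1 x2 y2 :: complex
  assumes r1: "x1 * cnj x1 + y1 * cnj y1 = 1" and r2: "x2 * cnj x2 + y2 * cnj y2 = 1"
    and r3: "x1 * cnj x2 + y1 * cnj y2 = 0"
  shows "(x1*y2 - x2*y1) * cnj (x1*y2 - x2*y1) = 1"
    and "cnj x2 = - y1 * cnj (x1*y2 - x2*y1)"
proof -
  have r3': "cnj x1 * x2 + cnj y1 * y2 = 0" using arg_cong[OF r3, of cnj] by simp
  have "(x1*y2 - x2*y1) * cnj (x1*y2 - x2*y1) =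
     (x1 * cnj x1 + y1 * cnj y1) * (x2 * cnj x2 + y2 * cnj y2) - (x1 * cnj x2 + y1 * cnj y2) * (cnj x1 * x2 + cnj y1 * y2)"
    by (simp add: algebra_simps)
  then show "(x1*y2 - x2*y1) * cnj (x1*y2 - x2*y1) = 1" using r1 r2 r3 r3' by simp
  have "- y1 * cnj (x1*y2 - x2*y1) = (x1 * cnj x1 + y1 * cnj y1) * cnj x2 - cnj x1 * (x1 * cnj x2 + y1 * cnj y2)"
    by (simp add: algebra_simps)
  then show "cnj x2 = - y1 * cnj (x1*y2 - x2*y1)" using r1 r3 by simp
qed

lemma PHI_U2:
  fixes x1 y1 x2 y2 :: complex
  assumes r1: "x1 * cnj x1 + y1 * cnj y1 = 1" and r2: "x2 * cnj x2 + y2 * cnj y2 = 1"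
    and r3: "x1 * cnj x2 + y1 * cnj y2 = 0" and NN: "\<bar>l + L\<bar> \<le> N"
  shows "PHI N l L x1 y1 x2 y2 = (-1)^nat(N+l+L) * (x1*y2 - x2*y1) powi (L-N) * x1^nat(N-l-L) * y1^nat(N+l+L)"
proof -
  define e where "e = x1*y2 - x2*y1"
  have ee: "e * cnj e = 1" using unit_rel(1)[OF r1 r2 r3] unfolding e_def .
  have cx: "cnj x2 = - y1 * cnj e" using unit_rel(2)[OF r1 r2 r3] unfolding e_def .
  have nz: "e \<noteq> 0" using ee by auto
  have ce: "cnj e = inverse e" using ee nz by (simp add: field_simps)
  have cx2: "cnj x2 = - y1 * inverse e" using cx ce by simp
  have db: "cnj x1 * cnj y2 - cnj x2 * cnj y1 = inverse e" using ce unfolding e_def by simp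
  consider (A) "l + L \<ge> 0 \<and> l + 2*L \<ge> 0" | (B) "\<not> (l + L \<ge> 0 \<and> l + 2*L \<ge> 0)" "l + L \<ge> 0 \<and> l + 2*L \<le> 0"
    | (C) "\<not> (l + L \<ge> 0 \<and> l + 2*L \<ge> 0)" "\<not> (l + L \<ge> 0 \<and> l + 2*L \<le> 0)" "l + L \<le> 0 \<and> l + 2*L \<ge> 0"
    | (D) "\<not> (l + L \<ge> 0 \<and> l + 2*L \<ge> 0)" "\<not> (l + L \<ge> 0 \<and> l + 2*L \<le> 0)" "\<not> (l + L \<le> 0 \<and> l + 2*L \<ge> 0)"
    by linarith
  then show ?thesis
  proof cases
    case A show ?thesis
      unfolding PHI_def Let_def e_def[symmetric] db if_P[OF A] unfolding cx2
      by (rule UA[OF nz, where c = "nat (2*(l+L))"]) (use A NN in \<open>simp_all add: nat_eq_iff algebra_simps\<close>)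
  next
    case B show ?thesis
      unfolding PHI_def Let_def e_def[symmetric] db if_not_P[OF B(1)] if_P[OF B(2)] unfolding cx2
      by (rule UB[OF nz, where c = "nat (2*(l+L))"]) (use B NN in \<open>simp_all add: nat_eq_iff algebra_simps\<close>)
  next
    case C show ?thesis
      unfolding PHI_def Let_def e_def[symmetric] db if_not_P[OF C(1)] if_not_P[OF C(2)] if_P[OF C(3)] unfolding cx2
      by (rule UC[OF nz, where c = "nat (-2*(l+L))"]) (use C NN in \<open>simp_all add: nat_eq_iff algebra_simps\<close>)
  next
    case D
    have neg: "l + L < 0" "l + 2*L < 0" using D by linarith+
    show ?thesis
      unfolding PHI_def Let_def e_def[symmetric] db if_not_P[OF D(1)] if_not_P[OF D(2)] if_not_P[OF D(3)] unfolding cx2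
      by (rule UD[OF nz, where c = "nat (-2*(l+L))"]) (use neg NN in \<open>simp_all add: nat_eq_iff algebra_simps\<close>)
  qed
qed

lemma diag_left:
  "(diag2 t1 t2 ** Z)$1$1 = t1 * Z$1$1" "(diag2 t1 t2 ** Z)$1$2 = t1 * Z$1$2"
  "(diag2 t1 t2 ** Z)$2$1 = t2 * Z$2$1" "(diag2 t1 t2 ** Z)$2$2 = t2 * Z$2$2"
  by (simp_all add: matrix_matrix_mult_def diag2_def sum_2)

lemma diag_right:
  "(Z ** diag2 t1 t2)$1$1 = t1 * Z$1$1" "(Z ** diag2 t1 t2)$1$2 = t2 * Z$1$2"
  "(Z ** diag2 t1 t2)$2$1 = t1 * Z$2$1" "(Z ** diag2 t1 t2)$2$2 = t2 * Z$2$2"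
  by (simp_all add: matrix_matrix_mult_def diag2_def sum_2 mult.commute)

lemma U2_iff: "k \<in> U2 \<longleftrightarrow>
   k$1$1 * cnj (k$1$1) + k$1$2 * cnj (k$1$2) = 1 \<and> k$2$1 * cnj (k$2$1) + k$2$2 * cnj (k$2$2) = 1 \<and>
   k$1$1 * cnj (k$2$1) + k$1$2 * cnj (k$2$2) = 0 \<and> k$2$1 * cnj (k$1$1) + k$2$2 * cnj (k$1$2) = 0"
  unfolding U2_def by (auto simp add: vec_eq_iff forall_2 matrix_matrix_mult_def sum_2 conj_transpose2_def mat_def)

lemma pow_poly: "f \<in> mat2_poly_funs \<Longrightarrow> (\<lambda>Z. f Z ^ n) \<in> mat2_poly_funs"
proof (induction n)
  case 0 then show ?case using mat2_poly_funs.const[of 1] by simp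
next
  case (Suc n) then show ?case using mat2_poly_funs.mult[OF Suc.prems Suc.IH] by simp
qed

lemma powi_poly: "f \<in> mat2_poly_funs \<Longrightarrow> k \<ge> 0 \<Longrightarrow> (\<lambda>Z. f Z powi k) \<in> mat2_poly_funs"
  using pow_poly[of f "nat k"] by (simp add: power_int_def)

lemma diff_poly: "f \<in> mat2_poly_funs \<Longrightarrow> g \<in> mat2_poly_funs \<Longrightarrow> (\<lambda>Z. f Z - g Z) \<in> mat2_poly_funs"
  using mat2_poly_funs.add[OF _ mat2_poly_funs.mult[OF mat2_poly_funs.const[of "-1"]], of f g] by simp

lemmas polyI = mat2_poly_funs.intros diff_poly powi_poly

lemma phi_poly:
  assumes NN: "\<bar>l + L\<bar> \<le> N"
  shows "phi_sigma N l L \<in> mat2_poly_funs"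
proof -
  consider (A) "l + L \<ge> 0 \<and> l + 2*L \<ge> 0" | (B) "\<not> (l + L \<ge> 0 \<and> l + 2*L \<ge> 0)" "l + L \<ge> 0 \<and> l + 2*L \<le> 0"
    | (C) "\<not> (l + L \<ge> 0 \<and> l + 2*L \<ge> 0)" "\<not> (l + L \<ge> 0 \<and> l + 2*L \<le> 0)" "l + L \<le> 0 \<and> l + 2*L \<ge> 0"
    | (D) "\<not> (l + L \<ge> 0 \<and> l + 2*L \<ge> 0)" "\<not> (l + L \<ge> 0 \<and> l + 2*L \<le> 0)" "\<not> (l + L \<le> 0 \<and> l + 2*L \<ge> 0)"
    by linarith
  then show ?thesis
  proof cases
    case A
    then show ?thesis unfolding phi_sigma_def Let_def if_P[OF A]
      by (intro polyI) (use A NN in arith)+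
  next
    case B
    then show ?thesis unfolding phi_sigma_def Let_def if_not_P[OF B(1)] if_P[OF B(2)]
      by (intro polyI) (use B NN in arith)+
  next
    case C
    then show ?thesis unfolding phi_sigma_def Let_def if_not_P[OF C(1)] if_not_P[OF C(2)] if_P[OF C(3)]
      by (intro polyI) (use C NN in arith)+
  next
    case D
    have neg: "l + L < 0" "l + 2*L < 0" using D by linarith+
    show ?thesis unfolding phi_sigma_def Let_def if_not_P[OF D(1)] if_not_P[OF D(2)] if_not_P[OF D(3)]
      by (intro polyI) (use neg NN in arith)+
  qed
qed
lemma sum_single: "b \<le> (M::nat) \<Longrightarrow> (\<Sum>j\<le>M. (if j = b then u else 0) * A * B j * C j) = u * A * B b * (C b :: complex)"
proof -
  assume "b \<le> M"
  have "(\<Sum>j\<le>M. (if j = b then u else 0) * A * B j * C j) = (\<Sum>j\<le>M. if j = b then u * A * B j * C j else 0)"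
    by (rule sum.cong) auto
  also have "\<dots> = u * A * B b * C b" using \<open>b \<le> M\<close> by simp
  finally show ?thesis .
qed

lemma phi_left:
  assumes "cmod t1 = 1" "cmod t2 = 1" "\<bar>l + L\<bar> \<le> N"
  shows "phi_sigma N l L (diag2 t1 t2 ** Z) = chi (N + L) t1 * chi (- N + L) t2 * phi_sigma N l L Z"
  unfolding phi_PHI diag_left chi_unit[OF assms(1)] chi_unit[OF assms(2)] using PHI_left[OF assms] .

lemma phi_right:
  assumes "cmod t1 = 1" "cmod t2 = 1" "\<bar>l + L\<bar> \<le> N"
  shows "phi_sigma N l L (Z ** diag2 t1 t2) = chi (- l) t1 * chi (l + 2 * L) t2 * phi_sigma N l L Z"
  unfolding phi_PHI diag_right chi_unit[OF assms(1)] chi_unit[OF assms(2)] using PHI_right[OF assms] .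

lemma U2_diag:
  assumes "g \<in> U2" shows "g ** diag2 (cis \<theta>) (cis (-\<theta>)) \<in> U2"
proof -
  have m: "(a*x) * cnj (a*y) = (a * cnj a) * (x * cnj y)" for a x y :: complex by (simp add: algebra_simps)
  have c: "cis t * cnj (cis t) = 1" for t by (simp add: cis_cnj cis_mult)
  show ?thesis using assms unfolding U2_iff diag_right m c by simp
qed

theorem corollary4p2:
  fixes N l L :: int
  assumes "N \<ge> 0" and "\<bar>l + L\<bar> \<le> N"
  shows "phi_sigma N l L \<in> mat2_poly_funs \<and> bi_equivariant N l L (phi_sigma N l L)
         \<and> iota2 (phi_sigma N l L) \<in> tau_sigma_wt N L (- l - L)"
proof (intro conjI)
  show "phi_sigma N l L \<in> mat2_poly_funs" using phi_poly[OF assms(2)] .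
  show "bi_equivariant N l L (phi_sigma N l L)"
    unfolding bi_equivariant_def using phi_left[OF _ _ assms(2)] phi_right[OF _ _ assms(2)] by blast
  define b where "b = nat (N + l + L)"
  define a where "a = nat (N - l - L)"
  have b2: "b \<le> nat (2*N)" and ab: "nat (2*N) - b = a" using assms unfolding a_def b_def by (simp_all add: nat_eq_iff)
  have tau: "iota2 (phi_sigma N l L) \<in> tau_sigma N L"
    unfolding tau_sigma_def
  proof (intro CollectI conjI allI impI exI ballI)
    fix k assume "k \<notin> U2" then show "iota2 (phi_sigma N l L) k = 0" by (simp add: iota2_def)
  next
    fix k assume k: "k \<in> U2"
    have r: "k$1$1 * cnj (k$1$1) + k$1$2 * cnj (k$1$2) = 1" "k$2$1 * cnj (k$2$1) + k$2$2 * cnj (k$2$2) = 1"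
      "k$1$1 * cnj (k$2$1) + k$1$2 * cnj (k$2$2) = 0" using k unfolding U2_iff by auto
    have d: "k$1$1 * k$2$2 - k$2$1 * k$1$2 = det k" by (simp add: det_2 mult.commute)
    show "iota2 (phi_sigma N l L) k = (\<Sum>j\<le>nat (2*N). (\<lambda>j. if j = b then (-1)^b else 0) j * det k powi (L - N) * (k$1$1) ^ (nat (2*N) - j) * (k$1$2) ^ j)"
      unfolding sum_single[OF b2] ab using k
      by (simp add: iota2_def phi_PHI PHI_U2[OF r assms(2)] d a_def b_def)
  qed
  show "iota2 (phi_sigma N l L) \<in> tau_sigma_wt N L (- l - L)"
    unfolding tau_sigma_wt_def
  proof (intro CollectI conjI tau ballI allI)
    fix g \<theta> assume g: "g \<in> U2"
    have c1: "cmod (cis t) = 1" for t by simp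
    have "phi_sigma N l L (g ** diag2 (cis \<theta>) (cis (-\<theta>))) = cis (2 * of_int (- l - L) * \<theta>) * phi_sigma N l L g"
    proof -
      have e: "cis \<theta> powi (-l) * cis (-\<theta>) powi (l+2*L) = cis (2 * of_int (- l - L) * \<theta>)"
        unfolding cis_power_int cis_mult by (rule arg_cong[where f=cis]) (simp add: algebra_simps)
      show ?thesis using phi_right[OF c1 c1 assms(2), of g \<theta> "-\<theta>"] e unfolding chi_unit[OF c1] by simp
    qed
    then show "iota2 (phi_sigma N l L) (g ** diag2 (cis \<theta>) (cis (-\<theta>))) = cis (2 * of_int (- l - L) * \<theta>) * iota2 (phi_sigma N l L) g"
      using g U2_diag[OF g] by (simp add: iota2_def)
  qed
qed
end
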